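(* Let $D$ be an Egyptian domain with fraction field $K$, and let $x$ be an indeterminate. For a subring $A$ of $K(x)$ with fraction field $K(x)$, let $R(A)$ denote the subring of $K(x)$ generated by $\{1/a \mid a \in A\setminus\{0\}\}$. Then $R(D[x]) = R(K[x])$. Consequently, $D[x]$ is Bonaccian.
   Context: For an integral domain $A$ with fraction field $L$, an element of $L$ is $A$-Egyptian if it is a sum of reciprocals of distinct nonzero elements of $A$. $A$ is Egyptian if every nonzero element of $L$ is $A$-Egyptian, and $A$ is Bonaccian if for every nonzero $\alpha\in L$, either $\alpha$ or $\alpha^{-1}$ is $A$-Egyptian. *)

theory Defs
  imports "HOL-Computational_Algebra.Polynomial" "HOL-Computational_Algebra.Fraction_Field"
begin

definition egyptian_elem :: "'f::field set \<Rightarrow> 'f \<Rightarrow> bool" where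
  "egyptian_elem A \<alpha> \<longleftrightarrow> (\<exists>S. finite S \<and> S \<subseteq> A - {0} \<and> \<alpha> = (\<Sum>s\<in>S. inverse s))"

(* A is Egyptian: every nonzero element of the ambient field (= fraction field of A) is
   A-Egyptian. *)
definition egyptian :: "'f::field set \<Rightarrow> bool" where
  "egyptian A \<longleftrightarrow> (\<forall>\<alpha>. \<alpha> \<noteq> 0 \<longrightarrow> egyptian_elem A \<alpha>)"

definition bonaccian :: "'f::field set \<Rightarrow> bool" where
  "bonaccian A \<longleftrightarrow> (\<forall>\<alpha>. \<alpha> \<noteq> 0 \<longrightarrow> egyptian_elem A \<alpha> \<or> egyptian_elem A (inverse \<alpha>))"

definition subring_generated :: "'r::comm_ring_1 set \<Rightarrow> 'r set" where
  "subring_generated S = \<Inter>{T. 1 \<in> T \<and> S \<subseteq> T \<and>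
      (\<forall>x\<in>T. \<forall>y\<in>T. x + y \<in> T \<and> x * y \<in> T \<and> - x \<in> T)}"

definition R_ring :: "'f::field set \<Rightarrow> 'f set" where
  "R_ring A = subring_generated (inverse ` (A - {0}))"

definition emb :: "'a::idom \<Rightarrow> 'a fract" where
  "emb a = Fract a 1"

(* K(x) = Frac(K[x]) with K = Frac D *)
type_synonym 'a ratfun = "'a fract poly fract"

definition Kx :: "'a::idom ratfun set" where
  "Kx = range (\<lambda>p. Fract p 1)"

definition Dx :: "'a::idom ratfun set" where
  "Dx = range (\<lambda>p::'a poly. Fract (map_poly emb p) 1)"

end

theory Submission imports Defs begin

definition PF :: "'a::idom fract poly \<Rightarrow> 'a ratfun" where
  "PF p = Fract p 1"

lemma PF_mult: "PF (p * q) = PF p * PF q" by (simp add: PF_def)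
lemma PF_add: "PF (p + q) = PF p + PF q" by (simp add: PF_def)
lemma PF_uminus: "PF (- p) = - PF p" by (simp add: PF_def)
lemma PF_0: "PF 0 = 0" by (simp add: PF_def Zero_fract_def)
lemma PF_1: "PF 1 = 1" by (simp add: PF_def One_fract_def)
lemma PF_eq_iff: "PF p = PF q \<longleftrightarrow> p = q" by (simp add: PF_def eq_fract)
lemma PF_eq_0: "PF p = 0 \<longleftrightarrow> p = 0" using PF_eq_iff[of p 0] by (simp add: PF_0)
lemma inj_PF: "inj PF" by (simp add: inj_def PF_eq_iff)

lemma PF_const_sum: "finite E \<Longrightarrow> PF [:sum f E:] = (\<Sum>e\<in>E. PF [:f e:])"
proof (induction E rule: finite_induct)
  case empty then show ?case by (simp add: PF_0)
next
  case (insert x F)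
  have "[:f x + sum f F:] = [:f x:] + [:sum f F:]" by simp
  then show ?case using insert by (metis PF_add sum.insert)
qed

lemma PF_inv_const: "(e::'a::idom fract) \<noteq> 0 \<Longrightarrow> inverse (PF [:e:]) = PF [:inverse e:]"
proof -
  assume e: "e \<noteq> 0"
  have "PF [:e:] * PF [:inverse e:] = 1"
    using e by (simp add: PF_mult[symmetric] PF_1 one_pCons[symmetric])
  then show ?thesis by (metis inverse_unique)
qed

lemma emb_0: "emb 0 = 0" by (simp add: emb_def Zero_fract_def)
lemma emb_mult: "emb (a * b) = emb a * emb b" by (simp add: emb_def)
lemma emb_eq_0: "emb a = 0 \<longleftrightarrow> a = 0" by (simp add: emb_def Zero_fract_def eq_fract)

lemma clear_denom:
  fixes s :: "'a::idom fract poly"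
  shows "\<exists>d s'. d \<noteq> 0 \<and> smult (emb d) s = map_poly emb s'"
proof (induction s)
  case 0
  then show ?case by (intro exI[of _ 1] exI[of _ 0]) auto
next
  case (pCons c s0)
  then obtain d0 s0' where h: "d0 \<noteq> 0" "smult (emb d0) s0 = map_poly emb s0'" by blast
  obtain a b where c: "c = Fract a b" "b \<noteq> 0" by (cases c)
  have 1: "emb (b * d0) * c = emb (a * d0)"
    using c by (simp add: emb_def eq_fract algebra_simps)
  have 2: "smult (emb (b * d0)) s0 = map_poly emb (smult b s0')"
  proof -
    have "smult (emb (b * d0)) s0 = smult (emb b) (smult (emb d0) s0)"
      by (simp only: smult_smult emb_mult)
    also have "\<dots> = smult (emb b) (map_poly emb s0')" by (simp only: h(2))
    also have "\<dots> = map_poly emb (smult b s0')"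
      by (rule map_poly_smult[symmetric]) (simp_all add: emb_0 emb_mult)
    finally show ?thesis .
  qed
  have "smult (emb (b * d0)) (pCons c s0) = map_poly emb (pCons (a * d0) (smult b s0'))"
  proof -
    have "smult (emb (b * d0)) (pCons c s0) = pCons (emb (a * d0)) (smult (emb (b * d0)) s0)"
      using 1 by (simp only: smult_pCons)
    also have "\<dots> = pCons (emb (a * d0)) (map_poly emb (smult b s0'))" by (simp only: 2)
    also have "\<dots> = map_poly emb (pCons (a * d0) (smult b s0'))"
      by (rule map_poly_pCons[symmetric]) (simp add: emb_0)
    finally show ?thesis .
  qed
  moreover have "b * d0 \<noteq> 0" using c h by simp
  ultimately show ?case by blast
qed

lemma H:
  fixes s :: "'a::idom fract poly"
  assumes eg: "egyptian (range (emb :: 'a \<Rightarrow> 'a fract))" and s: "s \<noteq> 0"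
  shows "\<exists>T. finite T \<and> T \<subseteq> range (map_poly emb) - {0} \<and> (\<forall>t\<in>T. degree t = degree s) \<and>
           inverse (PF s) = (\<Sum>t\<in>T. inverse (PF t))"
proof -
  obtain d s' where d: "d \<noteq> 0" "smult (emb d) s = map_poly emb s'" using clear_denom by blast
  define s'' where "s'' = map_poly emb s'"
  have ed: "emb d \<noteq> 0" using d by (simp add: emb_eq_0)
  have s''e: "s'' = smult (emb d) s" by (simp only: s''_def d(2))
  have s''0: "s'' \<noteq> 0" unfolding s''e using s ed by (simp only: smult_eq_0_iff) simp
  have degs: "degree s'' = degree s" unfolding s''e using ed by (simp only: degree_smult_eq) simp
  have "egyptian_elem (range emb) (emb d)" using eg ed unfolding egyptian_def by blast
  then obtain E where E: "finite E" "E \<subseteq> range emb - {0}" "emb d = (\<Sum>e\<in>E. inverse e)"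
    unfolding egyptian_elem_def by blast
  define T where "T = (\<lambda>e. smult e s'') ` E"
  have inj: "inj_on (\<lambda>e. smult e s'') E"
  proof (rule inj_onI)
    fix x y assume "smult x s'' = smult y s''"
    then have "smult (x - y) s'' = 0" by (simp add: smult_diff_left)
    then show "x = y" using s''0 by simp
  qed
  have PFs'': "PF s'' = PF [:emb d:] * PF s"
    using d s''_def by (simp add: PF_mult[symmetric])
  have "inverse (PF s) = PF [:emb d:] * inverse (PF s'')"
  proof -
    have a: "PF s'' \<noteq> 0" using s''0 by (simp add: PF_eq_0)
    then have "PF [:emb d:] \<noteq> 0" "PF s \<noteq> 0" using PFs'' by auto
    then show ?thesis using PFs'' by (simp add: field_simps)
  qed
  also have "\<dots> = (\<Sum>e\<in>E. PF [:inverse e:] * inverse (PF s''))"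
    using E by (simp add: PF_const_sum sum_distrib_right)
  also have "\<dots> = (\<Sum>e\<in>E. inverse (PF (smult e s'')))"
  proof (rule sum.cong)
    fix e assume "e \<in> E"
    then have "e \<noteq> 0" using E by auto
    then show "PF [:inverse e:] * inverse (PF s'') = inverse (PF (smult e s''))"
    proof -
      have "smult e s'' = [:e:] * s''" by simp
      then have "PF (smult e s'') = PF [:e:] * PF s''" by (simp only: PF_mult)
      then show ?thesis using \<open>e \<noteq> 0\<close> by (simp add: PF_inv_const)
    qed
  qed simp
  also have "\<dots> = (\<Sum>t\<in>T. inverse (PF t))"
    unfolding T_def using sum.reindex[OF inj, of "\<lambda>t. inverse (PF t)"] by simp
  finally have eq: "inverse (PF s) = (\<Sum>t\<in>T. inverse (PF t))" .
  have "T \<subseteq> range (map_poly emb) - {0}"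
  proof
    fix t assume "t \<in> T"
    then obtain e where e: "e \<in> E" "t = smult e s''" using T_def by blast
    then obtain e0 where e0: "e = emb e0" "e \<noteq> 0" using E by auto
    have "t = map_poly emb (smult e0 s')"
      using e e0 s''_def by (simp add: map_poly_smult emb_0 emb_mult)
    moreover have "t \<noteq> 0" unfolding e(2) using e0(2) s''0 by (simp only: smult_eq_0_iff) simp
    ultimately show "t \<in> range (map_poly emb) - {0}" by (simp only: Diff_iff rangeI singleton_iff) simp
  qed
  moreover have "\<forall>t\<in>T. degree t = degree s"
  proof
    fix t assume "t \<in> T"
    then obtain e where e: "e \<in> E" "t = smult e s''" using T_def by blast
    then have "e \<noteq> 0" using E by auto
    then show "degree t = degree s" using e degs by simp
  qed
  moreover have "finite T" using E T_def by simp
  ultimately show ?thesis using eq by blast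
qed

lemma fl1: "(a::'f::field) \<noteq> 0 \<Longrightarrow> b \<noteq> 0 \<Longrightarrow> a / (b * a) = inverse b"
  by (simp add: field_simps)

lemma fl2: "(R::'f::field) \<noteq> 0 \<Longrightarrow> S \<noteq> 0 \<Longrightarrow> Q \<noteq> 0 \<Longrightarrow> Q = S * R + M \<Longrightarrow>
  R / Q = inverse S + (- M) / (Q * S)"
proof -
  assume a: "R \<noteq> 0" "S \<noteq> 0" "Q \<noteq> 0" "Q = S * R + M"
  have "inverse S = Q / (Q * S)" using a by (simp add: inverse_eq_divide)
  then have "inverse S + (- M) / (Q * S) = (Q - M) / (Q * S)" by (simp add: diff_divide_distrib)
  also have "Q - M = S * R" using a by simp
  also have "(S * R) / (Q * S) = (R * S) / (Q * S)" by (simp only: mult.commute[of S R])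
  also have "\<dots> = R / Q" by (rule nonzero_mult_divide_mult_cancel_right[OF a(2)])
  finally show ?thesis by (rule sym)
qed

lemma G:
  fixes r q :: "'a::idom fract poly"
  assumes eg: "egyptian (range (emb :: 'a \<Rightarrow> 'a fract))"
  shows "r \<noteq> 0 \<Longrightarrow> q \<noteq> 0 \<Longrightarrow> degree r < degree q \<Longrightarrow>
    \<exists>T. finite T \<and> T \<subseteq> range (map_poly emb) - {0} \<and> (\<forall>t\<in>T. degree q - degree r \<le> degree t) \<and>
           PF r / PF q = (\<Sum>t\<in>T. inverse (PF t))"
proof (induction "degree r" arbitrary: r q rule: less_induct)
  case less
  define s where "s = q div r"
  define m where "m = q mod r"
  have qsm: "q = s * r + m" unfolding s_def m_def by simp
  have mdeg: "m = 0 \<or> degree m < degree r" unfolding m_def using degree_mod_less[OF less.prems(1)] .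
  have s0: "s \<noteq> 0"
  proof
    assume "s = 0"
    then have "q = m" using qsm by simp
    then show False using mdeg less.prems by auto
  qed
  have dsr: "degree (s * r) = degree s + degree r" using s0 less.prems(1) by (rule degree_mult_eq)
  have dq: "degree q = degree s + degree r"
  proof (cases "m = 0")
    case True then show ?thesis using qsm dsr by simp
  next
    case False
    then have "degree m < degree (s * r)" using mdeg dsr by simp
    then have "degree (s * r + m) = degree (s * r)" by (rule degree_add_eq_left)
    then show ?thesis using qsm dsr by simp
  qed
  obtain Ts where Ts: "finite Ts" "Ts \<subseteq> range (map_poly emb) - {0}" "\<forall>t\<in>Ts. degree t = degree s"
      "inverse (PF s) = (\<Sum>t\<in>Ts. inverse (PF t))"
    using H[OF eg s0] by blast
  have PFr: "PF r \<noteq> 0" "PF s \<noteq> 0" "PF q \<noteq> 0" using less.prems s0 by (simp_all add: PF_eq_0)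
  have PFq: "PF q = PF s * PF r + PF m" using qsm by (simp add: PF_mult PF_add)
  show ?case
  proof (cases "m = 0")
    case True
    then have e: "PF q = PF s * PF r" using PFq by (simp add: PF_0)
    have "PF r / PF q = inverse (PF s)" unfolding e by (rule fl1[OF PFr(1,2)])
    then have eq: "PF r / PF q = (\<Sum>t\<in>Ts. inverse (PF t))" using Ts(4) by simp
    have "\<forall>t\<in>Ts. degree q - degree r \<le> degree t" using Ts(3) dq by simp
    then show ?thesis using Ts(1,2) eq by (intro exI[of _ Ts] conjI)
  next
    case False
    have m1: "- m \<noteq> 0" "q * s \<noteq> 0" using False s0 less.prems by auto
    have m2: "degree (- m) < degree r" using False mdeg by simp
    have dqs: "degree (q * s) = degree q + degree s" using less.prems(2) s0 by (rule degree_mult_eq)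
    have m3: "degree (- m) < degree (q * s)" using m2 dqs less.prems(3) by simp
    obtain T' where T': "finite T'" "T' \<subseteq> range (map_poly emb) - {0}"
        "\<forall>t\<in>T'. degree (q * s) - degree (- m) \<le> degree t"
        "PF (- m) / PF (q * s) = (\<Sum>t\<in>T'. inverse (PF t))"
      using less.hyps[OF m2 m1(1) m1(2) m3] by blast
    have T'deg: "\<forall>t\<in>T'. degree s < degree t" using T'(3) dqs m2 less.prems(3) by auto
    have disj: "Ts \<inter> T' = {}" using T'deg Ts(3) by auto
    have "PF r / PF q = inverse (PF s) + PF (- m) / PF (q * s)"
      using fl2[OF PFr PFq] by (simp only: PF_mult PF_uminus)
    also have "\<dots> = (\<Sum>t\<in>Ts \<union> T'. inverse (PF t))"
      using Ts(4) T'(4) sum.union_disjoint[OF Ts(1) T'(1) disj, of "\<lambda>t. inverse (PF t)"] by simp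
    finally have eq: "PF r / PF q = (\<Sum>t\<in>Ts \<union> T'. inverse (PF t))" .
    have "\<forall>t\<in>Ts \<union> T'. degree q - degree r \<le> degree t" using Ts(3) T'deg dq by auto
    moreover have "finite (Ts \<union> T')" using Ts(1) T'(1) by simp
    moreover have "Ts \<union> T' \<subseteq> range (map_poly emb) - {0}" using Ts(2) T'(2) by (rule Un_least)
    ultimately show ?thesis using eq by (intro exI[of _ "Ts \<union> T'"] conjI)
  qed
qed

lemma egy_T:
  fixes \<rho> :: "'a::idom ratfun" and T :: "'a fract poly set"
  assumes "finite T" "T \<subseteq> range (map_poly emb) - {0}" "\<rho> = (\<Sum>t\<in>T. inverse (PF t))"
  shows "egyptian_elem Dx \<rho>"
proof -
  have inj: "inj_on PF T" using inj_PF by (rule inj_on_subset) simp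
  have "PF ` T \<subseteq> Dx - {0}"
  proof
    fix x assume "x \<in> PF ` T"
    then obtain t where t: "t \<in> T" "x = PF t" by blast
    then obtain p where p: "t = map_poly emb p" "t \<noteq> 0" using assms(2) by blast
    have "x \<in> Dx" unfolding Dx_def t(2) p(1) PF_def by (rule rangeI)
    moreover have "x \<noteq> 0" using t(2) p(2) by (simp add: PF_eq_0)
    ultimately show "x \<in> Dx - {0}" by simp
  qed
  moreover have "\<rho> = (\<Sum>x\<in>PF ` T. inverse x)"
    using assms(3) sum.reindex[OF inj, of inverse] by simp
  moreover have "finite (PF ` T)" using assms(1) by simp
  ultimately show ?thesis unfolding egyptian_elem_def by (intro exI[of _ "PF ` T"] conjI)
qed

lemma const_part:
  fixes c :: "'a::idom fract poly"
  assumes eg: "egyptian (range (emb :: 'a \<Rightarrow> 'a fract))" and c: "degree c = 0"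
  shows "\<exists>T. finite T \<and> T \<subseteq> range (map_poly emb) - {0} \<and> (\<forall>t\<in>T. degree t = 0) \<and>
           PF c = (\<Sum>t\<in>T. inverse (PF t))"
proof (cases "coeff c 0 = 0")
  case True
  then have "c = 0" using c by (metis degree_0_id pCons_0_0)
  then show ?thesis by (intro exI[of _ "{}"]) (simp add: PF_0)
next
  case False
  define c0 where "c0 = coeff c 0"
  have cc: "c = [:c0:]" unfolding c0_def using c by (rule degree_0_id[symmetric])
  have ne: "[:inverse c0:] \<noteq> 0" using False c0_def by simp
  have "inverse (PF [:inverse c0:]) = PF [:c0:]"
    using False c0_def PF_inv_const[of "inverse c0"] by simp
  then show ?thesis using H[OF eg ne] cc by simp
qed

lemma rem_part:
  fixes r q :: "'a::idom fract poly"
  assumes eg: "egyptian (range (emb :: 'a \<Rightarrow> 'a fract))" and q: "q \<noteq> 0"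
    and r: "r = 0 \<or> degree r < degree q"
  shows "\<exists>T. finite T \<and> T \<subseteq> range (map_poly emb) - {0} \<and> (\<forall>t\<in>T. 1 \<le> degree t) \<and>
           PF r / PF q = (\<Sum>t\<in>T. inverse (PF t))"
proof (cases "r = 0")
  case True
  then show ?thesis by (intro exI[of _ "{}"]) (simp add: PF_0)
next
  case False
  then have dr: "degree r < degree q" using r by simp
  obtain T where T: "finite T" "T \<subseteq> range (map_poly emb) - {0}"
      "\<forall>t\<in>T. degree q - degree r \<le> degree t" "PF r / PF q = (\<Sum>t\<in>T. inverse (PF t))"
    using G[OF eg False q dr] by blast
  have "\<forall>t\<in>T. 1 \<le> degree t" using T(3) dr by fastforce
  then show ?thesis using T(1,2,4) by (intro exI[of _ T] conjI)
qed

lemma fl3: "(Q::'f::field) \<noteq> 0 \<Longrightarrow> (C * Q + R) / Q = C + R / Q"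
  by (simp add: add_divide_distrib)

lemma core:
  fixes p q :: "'a::idom fract poly"
  assumes eg: "egyptian (range (emb :: 'a \<Rightarrow> 'a fract))" and q: "q \<noteq> 0"
    and d: "degree p \<le> degree q"
  shows "egyptian_elem (Dx :: 'a ratfun set) (PF p / PF q)"
proof -
  define c where "c = p div q"
  define r where "r = p mod q"
  have pcr: "p = c * q + r" unfolding c_def r_def by simp
  have rdeg: "r = 0 \<or> degree r < degree q" unfolding r_def using degree_mod_less[OF q] .
  have dc: "degree c = 0"
  proof (cases "c = 0")
    case True then show ?thesis by simp
  next
    case False
    have dcq: "degree (c * q) = degree c + degree q" using False q by (rule degree_mult_eq)
    have "degree p = degree (c * q)"
    proof (cases "r = 0")
      case True then show ?thesis using pcr by simp
    next
      case False
      then have "degree r < degree (c * q)" using rdeg dcq by simp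
      then show ?thesis unfolding pcr by (rule degree_add_eq_left)
    qed
    then show ?thesis using d dcq by simp
  qed
  obtain T0 where T0: "finite T0" "T0 \<subseteq> range (map_poly emb) - {0}" "\<forall>t\<in>T0. degree t = 0"
      "PF c = (\<Sum>t\<in>T0. inverse (PF t))"
    using const_part[OF eg dc] by blast
  obtain T1 where T1: "finite T1" "T1 \<subseteq> range (map_poly emb) - {0}" "\<forall>t\<in>T1. 1 \<le> degree t"
      "PF r / PF q = (\<Sum>t\<in>T1. inverse (PF t))"
    using rem_part[OF eg q rdeg] by blast
  have disj: "T0 \<inter> T1 = {}" using T0(3) T1(3) by fastforce
  have PFq: "PF q \<noteq> 0" using q by (simp add: PF_eq_0)
  have "PF p / PF q = PF c + PF r / PF q"
    unfolding pcr PF_add PF_mult using fl3[OF PFq] by simp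
  also have "\<dots> = (\<Sum>t\<in>T0 \<union> T1. inverse (PF t))"
    using T0(4) T1(4) sum.union_disjoint[OF T0(1) T1(1) disj, of "\<lambda>t. inverse (PF t)"] by simp
  finally have eq: "PF p / PF q = (\<Sum>t\<in>T0 \<union> T1. inverse (PF t))" .
  have fin: "finite (T0 \<union> T1)" using T0(1) T1(1) by simp
  have sub: "T0 \<union> T1 \<subseteq> range (map_poly emb) - {0}" using T0(2) T1(2) by (rule Un_least)
  show ?thesis by (rule egy_T[OF fin sub eq])
qed

lemma bon:
  assumes eg: "egyptian (range (emb :: 'a::idom \<Rightarrow> 'a fract))"
  shows "bonaccian (Dx :: 'a ratfun set)"
  unfolding bonaccian_def
proof (intro allI impI)
  fix \<alpha> :: "'a ratfun"
  assume a: "\<alpha> \<noteq> 0"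
  obtain p q where pq: "\<alpha> = Fract p q" "q \<noteq> 0" by (cases \<alpha>)
  have aPF: "\<alpha> = PF p / PF q" unfolding pq(1) PF_def by simp
  show "egyptian_elem Dx \<alpha> \<or> egyptian_elem Dx (inverse \<alpha>)"
  proof (cases "degree p \<le> degree q")
    case True
    then show ?thesis using core[OF eg pq(2) True] aPF by simp
  next
    case False
    have p0: "p \<noteq> 0"
    proof
      assume "p = 0"
      then have "\<alpha> = 0" using pq(1) by (simp add: Zero_fract_def eq_fract)
      then show False using a by simp
    qed
    have "inverse \<alpha> = PF q / PF p" unfolding pq(1) PF_def by simp
    moreover have "degree q \<le> degree p" using False by simp
    ultimately show ?thesis using core[OF eg p0] by simp
  qed
qed

lemma sg_base: "x \<in> S \<Longrightarrow> x \<in> subring_generated S"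
  unfolding subring_generated_def by blast

lemma sg_closed:
  assumes "x \<in> subring_generated S" "y \<in> subring_generated S"
  shows "x + y \<in> subring_generated S" "x * y \<in> subring_generated S" "- x \<in> subring_generated S"
  using assms unfolding subring_generated_def by blast+

lemma sg_one: "1 \<in> subring_generated S"
  unfolding subring_generated_def by blast

lemma sg_zero: "(0::'r::comm_ring_1) \<in> subring_generated S"
proof -
  have m: "- (1::'r) \<in> subring_generated S" by (rule sg_closed(3)[OF sg_one sg_one])
  have "(1::'r) + - 1 \<in> subring_generated S" by (rule sg_closed(1)[OF sg_one m])
  then show ?thesis by simp
qed

lemma sg_sum: "finite T \<Longrightarrow> (\<forall>t\<in>T. f t \<in> subring_generated S) \<Longrightarrow> sum f T \<in> subring_generated S"
  by (induction T rule: finite_induct) (simp_all add: sg_zero sg_closed)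

lemma sg_least: "S \<subseteq> subring_generated S' \<Longrightarrow> subring_generated S \<subseteq> subring_generated S'"
proof -
  assume a: "S \<subseteq> subring_generated S'"
  have "subring_generated S' \<in> {T. 1 \<in> T \<and> S \<subseteq> T \<and>
      (\<forall>x\<in>T. \<forall>y\<in>T. x + y \<in> T \<and> x * y \<in> T \<and> - x \<in> T)}"
  proof -
    have "\<forall>x\<in>subring_generated S'. \<forall>y\<in>subring_generated S'. x + y \<in> subring_generated S' \<and>
        x * y \<in> subring_generated S' \<and> - x \<in> subring_generated S'"
      by (intro ballI conjI) (rule sg_closed; assumption)+
    then show ?thesis using a sg_one[of S'] by simp
  qed
  then show ?thesis unfolding subring_generated_def[of S] by (rule Inter_lower)
qed

lemma Rpart:
  assumes eg: "egyptian (range (emb :: 'a::idom \<Rightarrow> 'a fract))"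
  shows "R_ring (Dx :: 'a ratfun set) = R_ring (Kx :: 'a ratfun set)"
proof
  have DK: "Dx \<subseteq> (Kx :: 'a ratfun set)" unfolding Dx_def Kx_def by (auto intro: rangeI)
  have "inverse ` (Dx - {0}) \<subseteq> inverse ` ((Kx :: 'a ratfun set) - {0})"
    by (rule image_mono[OF Diff_mono[OF DK subset_refl]])
  also have "\<dots> \<subseteq> subring_generated (inverse ` (Kx - {0}))" by (intro subsetI sg_base)
  finally show "R_ring (Dx :: 'a ratfun set) \<subseteq> R_ring Kx" unfolding R_ring_def by (rule sg_least)
next
  have "inverse ` ((Kx :: 'a ratfun set) - {0}) \<subseteq> R_ring Dx"
  proof
    fix y assume "y \<in> inverse ` ((Kx :: 'a ratfun set) - {0})"
    then obtain z where z: "z \<in> Kx - {0}" "y = inverse z" by (rule imageE) simp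
    then have zK: "z \<in> Kx" "z \<noteq> 0" by simp_all
    obtain f :: "'a fract poly" where f: "z = PF f" using zK(1) unfolding Kx_def PF_def by (rule rangeE)
    have f0: "f \<noteq> 0" using f \<open>z \<noteq> 0\<close> by (auto simp: PF_0)
    obtain T where T: "finite T" "T \<subseteq> range (map_poly emb) - {0}"
        "inverse (PF f) = (\<Sum>t\<in>T. inverse (PF t))"
      using H[OF eg f0] by blast
    have "\<forall>t\<in>T. inverse (PF t) \<in> R_ring Dx"
    proof
      fix t assume tT: "t \<in> T"
      have tr: "t \<in> range (map_poly emb)" "t \<noteq> 0" using T(2) tT by auto
      obtain p where p: "t = map_poly emb p" using tr(1) by (rule rangeE)
      have "PF t \<in> Dx" unfolding Dx_def p PF_def by (rule rangeI)
      moreover have "PF t \<noteq> 0" using tr(2) by (simp add: PF_eq_0)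
      ultimately have "PF t \<in> Dx - {0}" by simp
      then have "inverse (PF t) \<in> inverse ` (Dx - {0})" by (rule imageI)
      then show "inverse (PF t) \<in> R_ring Dx" unfolding R_ring_def by (rule sg_base)
    qed
    then show "y \<in> R_ring Dx" unfolding z(2) f T(3) unfolding R_ring_def by (rule sg_sum[OF T(1)])
  qed
  then show "R_ring (Kx :: 'a ratfun set) \<subseteq> R_ring Dx" unfolding R_ring_def by (rule sg_least)
qed

theorem proposition2p15:
  assumes "egyptian (range (emb :: 'a::idom \<Rightarrow> 'a fract))"
  shows "R_ring (Dx :: 'a ratfun set) = R_ring (Kx :: 'a ratfun set) \<and> bonaccian (Dx :: 'a ratfun set)"
  using Rpart[OF assms] bon[OF assms] by blast

end
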